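(* Let $\tau>0$ and $\rho\in\mathcal P_2(\mathbb R^d)$. If $\rho_\tau\in\operatorname{argmin}_{\nu\in\mathcal P_2}\{\frac1{2\tau}W_2^2(\rho,\nu)+E_\infty(\nu)\}$, then also $\rho_\tau\in\operatorname{argmin}_{\nu\in\mathcal P_2}\{\frac1{2\tau}W_2^2(\rho,\nu)+\tilde E_\infty(\nu;\rho_\tau)\}$.
   Context: $\mathcal N(x)=\frac1{2\pi}\log|x|$ if $d=2$, $\mathcal N(x)=\frac{-1}{d(d-2)\alpha_d}|x|^{2-d}$ if $d\ne2$; $\mathbf N\mu=\mathcal N*\mu$. $\mathcal P_2$: probability measures with finite second moment; $W_2$: 2-Wasserstein distance; $\|\nu\|_\infty\le1$ means $\nu$ has a density bounded by $1$. $E_\infty(\nu)=\frac12\int\mathbf N\nu\,d\nu$ if $\|\nu\|_\infty\le1$, else $+\infty$; for $\mu$ with $\|\mu\|_\infty\le1$, $\tilde E_\infty(\nu;\mu)=\int\mathbf N\mu\,d\nu$ if $\|\nu\|_\infty\le1$, else $+\infty$. *)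

theory Defs
  imports "HOL-Probability.Probability"
begin

definition unit_ball_vol :: "'a::euclidean_space itself \<Rightarrow> real" where
  "unit_ball_vol _ = measure lborel (ball (0::'a) 1)"

text \<open>Newtonian kernel (fundamental solution of the Laplacian), d = DIM('a).\<close>
definition newton_kernel :: "'a::euclidean_space \<Rightarrow> real" where
  "newton_kernel x =
     (let d = real DIM('a) in
      if DIM('a) = 2 then (1 / (2 * pi)) * ln (norm x)
      else - 1 / (d * (d - 2) * unit_ball_vol TYPE('a)) * norm x powr (2 - d))"

definition newton_pot :: "'a::euclidean_space measure \<Rightarrow> 'a \<Rightarrow> real" where
  "newton_pot \<mu> x = (\<integral>y. newton_kernel (x - y) \<partial>\<mu>)"

definition P2 :: "'a::euclidean_space measure set" where
  "P2 = {\<mu>. prob_space \<mu> \<and> sets \<mu> = sets borel \<and> (\<integral>\<^sup>+ x. ennreal ((norm x)\<^sup>2) \<partial>\<mu>) < \<infinity>}"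

definition couplings :: "'a::euclidean_space measure \<Rightarrow> 'a measure \<Rightarrow> ('a \<times> 'a) measure set" where
  "couplings \<mu> \<nu> = {\<gamma>. sets \<gamma> = sets (borel \<Otimes>\<^sub>M borel) \<and>
       distr \<gamma> borel fst = \<mu> \<and> distr \<gamma> borel snd = \<nu>}"

definition W2 :: "'a::euclidean_space measure \<Rightarrow> 'a measure \<Rightarrow> real" where
  "W2 \<mu> \<nu> = sqrt (enn2real (INF \<gamma>\<in>couplings \<mu> \<nu>. \<integral>\<^sup>+ p. ennreal ((dist (fst p) (snd p))\<^sup>2) \<partial>\<gamma>))"

text \<open>\<open>\<parallel>\<nu>\<parallel>\<^sub>\<infinity> \<le> 1\<close>: nu has a Lebesgue density bounded by 1.\<close>
definition dens_le_one :: "'a::euclidean_space measure \<Rightarrow> bool" where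
  "dens_le_one \<nu> \<longleftrightarrow> (\<exists>f \<in> borel_measurable borel. (\<forall>x. f x \<le> 1) \<and> \<nu> = density lborel f)"

definition E_inf :: "'a::euclidean_space measure \<Rightarrow> ereal" where
  "E_inf \<nu> = (if dens_le_one \<nu> then ereal ((1/2) * (\<integral>x. newton_pot \<nu> x \<partial>\<nu>)) else \<infinity>)"

definition E_inf_tilde :: "'a::euclidean_space measure \<Rightarrow> 'a measure \<Rightarrow> ereal" where
  "E_inf_tilde \<nu> \<mu> = (if dens_le_one \<nu> then ereal (\<integral>x. newton_pot \<mu> x \<partial>\<nu>) else \<infinity>)"

definition argmin_P2 :: "('a::euclidean_space measure \<Rightarrow> ereal) \<Rightarrow> 'a measure set" where
  "argmin_P2 F = {m \<in> P2. \<forall>\<nu>\<in>P2. F m \<le> F \<nu>}"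

end

theory Submission
  imports Defs
begin


definition sing :: "'a::euclidean_space \<Rightarrow> real" where
  "sing z = (if z \<noteq> 0 \<and> norm z < 1 then 1 / norm z ^ (DIM('a) - 1) else 0)"

definition kC :: "'a::euclidean_space itself \<Rightarrow> real" where
  "kC _ = 1 + \<bar>1 / (real DIM('a) * (real DIM('a) - 2) * unit_ball_vol TYPE('a))\<bar>"

lemma newton_kernel_measurable[measurable]: "newton_kernel \<in> borel_measurable (borel :: 'a::euclidean_space measure)"
  unfolding newton_kernel_def Let_def by measurable

lemma sing_measurable[measurable]: "sing \<in> borel_measurable (borel :: 'a::euclidean_space measure)"
  unfolding sing_def by measurable

lemma sing_nonneg: "0 \<le> sing z"
  unfolding sing_def by auto

lemma kC_ge1: "1 \<le> kC TYPE('a::euclidean_space)"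
  unfolding kC_def by simp

lemma powr_bound_aux:
  fixes r :: real and d :: nat
  assumes "d \<noteq> 2" "d \<ge> 1" "0 \<le> r"
  shows "r powr (2 - real d) \<le> (if r \<noteq> 0 \<and> r < 1 then 1 / r ^ (d - 1) else 0) + 1 + r"
proof (cases "r = 0")
  case True then show ?thesis by simp
next
  case False
  then have r: "0 < r" using assms by linarith
  show ?thesis
  proof (cases "r < 1")
    case False
    have "r powr (2 - real d) \<le> r powr 1"
      using False assms by (intro powr_mono) auto
    then show ?thesis using False r by auto
  next
    case True
    show ?thesis
    proof (cases "d = 1")
      case True
      then show ?thesis using \<open>r < 1\<close> r by auto
    next
      case False
      then have d3: "d \<ge> 3" using assms by auto
      have "r powr (2 - real d) \<le> r powr (1 - real d)"
        using r \<open>r < 1\<close> by (intro powr_mono') auto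
      also have "\<dots> = 1 / r ^ (d - 1)"
      proof -
        have "1 - real d = - real (d - 1)" using d3 by linarith
        then have "r powr (1 - real d) = inverse (r powr real (d - 1))"
          by (simp only: powr_minus)
        also have "\<dots> = 1 / r ^ (d - 1)" using r by (simp add: powr_realpow divide_inverse)
        finally show ?thesis .
      qed
      finally have "r powr (2 - real d) \<le> 1 / r ^ (d - 1)" .
      then show ?thesis using r \<open>r < 1\<close> by auto
    qed
  qed
qed

lemma ln_bound_aux:
  fixes r :: real
  assumes "0 \<le> r"
  shows "\<bar>ln r\<bar> \<le> (if r \<noteq> 0 \<and> r < 1 then 1 / r else 0) + 1 + r"
proof (cases "r = 0")
  case True then show ?thesis by simp
next
  case False
  then have r: "0 < r" using assms by simp
  show ?thesis
  proof (cases "r < 1")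
    case False
    have "ln r \<le> r - 1" using r by (rule ln_le_minus_one)
    moreover have "0 \<le> ln r" using False by simp
    ultimately show ?thesis using False by simp
  next
    case True
    have "ln (1/r) \<le> 1/r - 1" using r by (intro ln_le_minus_one) auto
    moreover have "ln (1/r) = - ln r" using r by (simp add: ln_div)
    moreover have "ln r \<le> 0" using True r by simp
    ultimately show ?thesis using True r by simp
  qed
qed

lemma kernel_bound:
  fixes z :: "'a::euclidean_space"
  shows "\<bar>newton_kernel z\<bar> \<le> kC TYPE('a) * (sing z + 1 + norm z)"
proof -
  define b where "b = sing z + 1 + norm z"
  have b0: "0 \<le> b" unfolding b_def using sing_nonneg[of z] by simp
  have d1: "DIM('a) \<ge> 1" by (simp add: DIM_positive Suc_leI)
  show ?thesis
  proof (cases "DIM('a) = 2")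
    case True
    have "\<bar>newton_kernel z\<bar> = \<bar>ln (norm z)\<bar> / (2 * pi)"
      using True unfolding newton_kernel_def Let_def by (simp add: abs_mult)
    also have "\<dots> \<le> \<bar>ln (norm z)\<bar>"
      using pi_gt3 divide_left_mono[of 1 "2*pi" "\<bar>ln (norm z)\<bar>"] by simp
    also have "\<dots> \<le> b"
    proof -
      have "\<bar>ln (norm z)\<bar> \<le> (if norm z \<noteq> 0 \<and> norm z < 1 then 1 / norm z else 0) + 1 + norm z"
        by (rule ln_bound_aux) simp
      moreover have "sing z = (if norm z \<noteq> 0 \<and> norm z < 1 then 1 / norm z else 0)"
        using True unfolding sing_def by simp
      ultimately show ?thesis unfolding b_def by linarith
    qed
    also have "\<dots> \<le> kC TYPE('a) * b" using kC_ge1[where 'a='a] b0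
      by (simp add: mult_le_cancel_right1)
    finally show ?thesis unfolding b_def .
  next
    case False
    define k where "k = 1 / (real DIM('a) * (real DIM('a) - 2) * unit_ball_vol TYPE('a))"
    have "\<bar>newton_kernel z\<bar> = \<bar>k\<bar> * norm z powr (2 - real DIM('a))"
      using False unfolding newton_kernel_def Let_def k_def by (simp add: abs_mult)
    also have "\<dots> \<le> \<bar>k\<bar> * b"
    proof -
      have "norm z powr (2 - real DIM('a)) \<le> (if norm z \<noteq> 0 \<and> norm z < 1 then 1 / norm z ^ (DIM('a) - 1) else 0) + 1 + norm z"
        using False d1 by (intro powr_bound_aux) auto
      moreover have "sing z = (if norm z \<noteq> 0 \<and> norm z < 1 then 1 / norm z ^ (DIM('a) - 1) else 0)"
        unfolding sing_def by simp
      ultimately show ?thesis unfolding b_def by (intro mult_left_mono) auto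
    qed
    also have "\<dots> \<le> kC TYPE('a) * b"
      unfolding kC_def k_def using b0 by (intro mult_right_mono) auto
    finally show ?thesis unfolding b_def .
  qed
qed

lemma lborel_ball_scale:
  fixes r :: real assumes "0 \<le> r"
  shows "emeasure lborel (ball (0::'a::euclidean_space) r) = ennreal (r ^ DIM('a)) * emeasure lborel (ball (0::'a) 1)"
proof -
  have eq: "\<And>A::'a set. A \<in> sets borel \<Longrightarrow> emeasure lebesgue A = emeasure lborel A"
    by (subst emeasure_completion) (auto simp: main_part_sets)
  show ?thesis using emeasure_lebesgue_ball_conv_unit_ball[OF assms, of "0::'a"]
    by (simp add: eq)
qed

lemma dyadic_choice:
  fixes r :: real assumes "0 < r" "r < 1"
  obtains m :: nat where "(1/2)^(m+1) < r" "r \<le> (1/2)^m"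
proof -
  have ex: "\<exists>n. (1/2::real)^n < r" using assms by (intro real_arch_pow_inv) auto
  define k where "k = (LEAST n. (1/2::real)^n < r)"
  have k1: "(1/2::real)^k < r" unfolding k_def using ex by (rule LeastI_ex)
  have k0: "k \<noteq> 0"
  proof
    assume "k = 0" then show False using k1 assms by simp
  qed
  have "\<not> (1/2::real)^(k-1) < r" unfolding k_def
    by (rule not_less_Least) (use k0 k_def in auto)
  then show ?thesis using k1 k0 that[of "k-1"] by auto
qed

lemma sing_integral_finite:
  "(\<integral>\<^sup>+z. ennreal (sing (z::'a::euclidean_space)) \<partial>lborel) < \<infinity>"
proof -
  define d where "d = DIM('a)"
  have d1: "d \<ge> 1" unfolding d_def by (simp add: DIM_positive Suc_leI)
  define c :: "nat \<Rightarrow> real" where "c m = (2^(m+1))^(d-1)" for m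
  define B :: "nat \<Rightarrow> 'a set" where "B m = ball 0 (2*(1/2)^m)" for m
  have pt: "ennreal (sing z) \<le> (\<Sum>m. ennreal (c m) * indicator (B m) z)" for z :: 'a
  proof (cases "z \<noteq> 0 \<and> norm z < 1")
    case False then show ?thesis unfolding sing_def by auto
  next
    case True
    then have r: "0 < norm z" "norm z < 1" by auto
    obtain m where m: "(1/2)^(m+1) < norm z" "norm z \<le> (1/2)^m" using dyadic_choice[OF r] .
    have zB: "z \<in> B m" unfolding B_def using m
      by (simp add: dist_norm)
    have "sing z = (1 / norm z)^(d-1)" using True unfolding sing_def d_def by (simp add: power_one_over)
    also have "\<dots> \<le> (2^(m+1))^(d-1)"
    proof (intro power_mono)
      have "1 / norm z < 1 / (1/2)^(m+1)" using m r by (intro divide_strict_left_mono) auto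
      then show "1 / norm z \<le> 2^(m+1)" by (simp add: power_one_over)
    qed (use r in auto)
    finally have "ennreal (sing z) \<le> ennreal (c m) * indicator (B m) z"
      using zB unfolding c_def by (simp add: ennreal_leI)
    also have "\<dots> \<le> (\<Sum>m. ennreal (c m) * indicator (B m) z)"
    proof -
      have "(\<Sum>i\<in>{m}. ennreal (c i) * indicator (B i) z) \<le> (\<Sum>i. ennreal (c i) * indicator (B i) z)"
        by (rule sum_le_suminf) auto
      then show ?thesis by (subst (asm) sum.insert) auto
    qed
    finally show ?thesis .
  qed
  have Bmeas[measurable]: "B m \<in> sets borel" for m unfolding B_def by simp
  define V where "V = emeasure lborel (ball (0::'a) 1)"
  have V: "V < \<infinity>" unfolding V_def by (rule emeasure_lborel_ball_finite)
  have cm: "c m * (2*(1/2)^m)^d = 2^(2*d-1) * (1/2)^m" for m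
  proof -
    obtain e where e: "d = e + 1" using d1 by (metis add.commute le_Suc_ex)
    show ?thesis unfolding c_def e
      by (simp add: power_mult_distrib power_divide power_add power_mult field_simps power2_eq_square)
  qed
  have summ: "summable (\<lambda>m. (2::real)^(2*d-1) * (1/2)^m)"
    by (intro summable_mult summable_geometric) auto
  have "(\<integral>\<^sup>+z. ennreal (sing (z::'a)) \<partial>lborel) \<le> (\<integral>\<^sup>+z. (\<Sum>m. ennreal (c m) * indicator (B m) z) \<partial>lborel)"
    by (rule nn_integral_mono) (rule pt)
  also have "\<dots> = (\<Sum>m. \<integral>\<^sup>+z. ennreal (c m) * indicator (B m) z \<partial>lborel)"
    by (intro nn_integral_suminf) measurable
  also have "\<dots> = (\<Sum>m. ennreal (c m) * emeasure lborel (B m))"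
    by (simp add: nn_integral_cmult_indicator)
  also have "\<dots> = (\<Sum>m. ennreal (2^(2*d-1) * (1/2)^m) * V)"
  proof (intro suminf_cong)
    fix m
    have "emeasure lborel (B m) = ennreal ((2*(1/2)^m)^d) * V"
      unfolding B_def V_def d_def by (rule lborel_ball_scale) simp
    moreover have "ennreal (c m * (2*(1/2)^m)^d) = ennreal (c m) * ennreal ((2*(1/2)^m)^d)"
      by (rule ennreal_mult) (auto simp: c_def)
    ultimately show "ennreal (c m) * emeasure lborel (B m) = ennreal (2^(2*d-1) * (1/2)^m) * V"
      by (metis cm mult.assoc)
  qed
  also have "\<dots> = (\<Sum>m. ennreal (2^(2*d-1) * (1/2)^m)) * V"
    by (rule ennreal_suminf_multc)
  also have "\<dots> = ennreal (\<Sum>m. 2^(2*d-1) * (1/2)^m) * V"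
    by (subst suminf_ennreal2[OF _ summ]) auto
  also have "\<dots> < \<infinity>" using V by (simp add: ennreal_mult_less_top)
  finally show ?thesis .
qed
lemma nn_integral_reflect:
  fixes h :: "'a::euclidean_space \<Rightarrow> ennreal"
  assumes [measurable]: "h \<in> borel_measurable borel"
  shows "(\<integral>\<^sup>+y. h (x - y) \<partial>lborel) = (\<integral>\<^sup>+z. h z \<partial>lborel)"
proof -
  have "(\<integral>\<^sup>+z. h z \<partial>lborel) = (\<integral>\<^sup>+z. h z \<partial>density (distr lborel borel (\<lambda>y. x + (-1) *\<^sub>R y)) (\<lambda>_. ennreal (\<bar>-1::real\<bar> ^ DIM('a))))"
    by (subst lborel_affine[of "-1" x, symmetric]) auto
  also have "\<dots> = (\<integral>\<^sup>+y. h (x - y) \<partial>lborel)"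
    by (simp add: nn_integral_density nn_integral_distr)
  finally show ?thesis ..
qed

definition dens :: "('a::euclidean_space \<Rightarrow> real) \<Rightarrow> bool" where
  "dens p \<longleftrightarrow> p \<in> borel_measurable borel \<and> (\<forall>x. 0 \<le> p x \<and> p x \<le> 1) \<and>
     (\<integral>\<^sup>+x. ennreal (p x) \<partial>lborel) < \<infinity> \<and> (\<integral>\<^sup>+x. ennreal (p x * (norm x)^2) \<partial>lborel) < \<infinity>"

lemma dens_first_moment:
  assumes "dens p"
  shows "(\<integral>\<^sup>+x. ennreal (p x * norm x) \<partial>lborel) < \<infinity>"
proof -
  have [measurable]: "p \<in> borel_measurable borel" using assms unfolding dens_def by auto
  have "(\<integral>\<^sup>+x. ennreal (p x * norm x) \<partial>lborel) \<le> (\<integral>\<^sup>+x. ennreal (p x) + ennreal (p x * (norm x)^2) \<partial>lborel)"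
  proof (rule nn_integral_mono)
    fix x :: 'a
    have p0: "0 \<le> p x" using assms unfolding dens_def by auto
    have "norm x \<le> 1 + (norm x)^2" by (smt (verit) norm_ge_zero power2_eq_square mult_le_cancel_left1 zero_le_square)
    then have "p x * norm x \<le> p x + p x * (norm x)^2" using p0
      by (metis distrib_left mult.right_neutral mult_left_mono)
    then show "ennreal (p x * norm x) \<le> ennreal (p x) + ennreal (p x * (norm x)^2)"
      using p0 by (simp add: ennreal_plus[symmetric] del: ennreal_plus)
  qed
  also have "\<dots> = (\<integral>\<^sup>+x. ennreal (p x) \<partial>lborel) + (\<integral>\<^sup>+x. ennreal (p x * (norm x)^2) \<partial>lborel)"
    by (rule nn_integral_add) auto
  also have "\<dots> < \<infinity>" using assms unfolding dens_def by auto
  finally show ?thesis .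
qed

lemma inner_bound:
  fixes q :: "'a::euclidean_space \<Rightarrow> real"
  assumes "dens q"
  obtains ks mq m1 where "0 \<le> ks" "0 \<le> mq" "0 \<le> m1"
    "\<And>x. (\<integral>\<^sup>+y. ennreal (q y * (sing (x - y) + 1 + norm (x - y))) \<partial>lborel) \<le> ennreal (ks + (1 + norm x) * mq + m1)"
proof -
  have [measurable]: "q \<in> borel_measurable borel" and q01: "\<And>x. 0 \<le> q x" "\<And>x. q x \<le> 1"
    using assms unfolding dens_def by auto
  obtain ks where ks: "0 \<le> ks" "(\<integral>\<^sup>+z. ennreal (sing (z::'a)) \<partial>lborel) = ennreal ks"
    using sing_integral_finite[where 'a='a] by (auto simp: less_top_ennreal)
  obtain mq where mq: "0 \<le> mq" "(\<integral>\<^sup>+z. ennreal (q z) \<partial>lborel) = ennreal mq"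
    using assms unfolding dens_def by (auto simp: less_top_ennreal)
  obtain m1 where m1: "0 \<le> m1" "(\<integral>\<^sup>+z. ennreal (q z * norm z) \<partial>lborel) = ennreal m1"
    using dens_first_moment[OF assms] by (auto simp: less_top_ennreal)
  show ?thesis
  proof (rule that[OF ks(1) mq(1) m1(1)])
    fix x :: 'a
    have "(\<integral>\<^sup>+y. ennreal (q y * (sing (x - y) + 1 + norm (x - y))) \<partial>lborel)
       \<le> (\<integral>\<^sup>+y. ennreal (sing (x - y)) + (ennreal (1 + norm x) * ennreal (q y) + ennreal (q y * norm y)) \<partial>lborel)"
    proof (rule nn_integral_mono)
      fix y :: 'a
      have s0: "0 \<le> sing (x - y)" by (rule sing_nonneg)
      have "q y * sing (x - y) \<le> sing (x - y)" using q01[of y] s0 by (simp add: mult_left_le_one_le)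
      moreover have "norm (x - y) \<le> norm x + norm y" by (rule norm_triangle_ineq4)
      then have "q y * norm (x - y) \<le> q y * norm x + q y * norm y"
        using q01[of y] by (metis distrib_left mult_left_mono)
      ultimately have "q y * (sing (x - y) + 1 + norm (x - y)) \<le> sing (x - y) + ((1 + norm x) * q y + q y * norm y)"
        by (simp add: algebra_simps)
      then show "ennreal (q y * (sing (x - y) + 1 + norm (x - y))) \<le> ennreal (sing (x - y)) + (ennreal (1 + norm x) * ennreal (q y) + ennreal (q y * norm y))"
        using q01[of y] s0 by (simp add: ennreal_plus[symmetric] ennreal_mult[symmetric] del: ennreal_plus)
    qed
    also have "\<dots> = (\<integral>\<^sup>+y. ennreal (sing (x - y)) \<partial>lborel) + ((\<integral>\<^sup>+y. ennreal (1 + norm x) * ennreal (q y) \<partial>lborel) + (\<integral>\<^sup>+y. ennreal (q y * norm y) \<partial>lborel))"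
      by (subst nn_integral_add, measurable, subst nn_integral_add) auto
    also have "\<dots> = ennreal ks + (ennreal (1 + norm x) * ennreal mq + ennreal m1)"
      using ks mq m1 by (simp add: nn_integral_cmult nn_integral_reflect[where h="\<lambda>z. ennreal (sing z)"])
    also have "\<dots> = ennreal (ks + (1 + norm x) * mq + m1)"
      using ks mq m1 by (simp add: ennreal_plus[symmetric] ennreal_mult[symmetric] add.assoc del: ennreal_plus)
    finally show "(\<integral>\<^sup>+y. ennreal (q y * (sing (x - y) + 1 + norm (x - y))) \<partial>lborel) \<le> ennreal (ks + (1 + norm x) * mq + m1)" .
  qed
qed

lemma kernel_integrable:
  fixes p q :: "'a::euclidean_space \<Rightarrow> real"
  assumes "dens p" "dens q"
  shows "integrable (lborel \<Otimes>\<^sub>M lborel) (\<lambda>z. p (fst z) * q (snd z) * newton_kernel (fst z - snd z))"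
proof (rule integrableI_bounded)
  have [measurable]: "p \<in> borel_measurable borel" "q \<in> borel_measurable borel"
    and p01: "\<And>x. 0 \<le> p x" "\<And>x. p x \<le> 1" and q01: "\<And>x. 0 \<le> q x"
    using assms unfolding dens_def by auto
  have [measurable]: "(\<lambda>z::'a\<times>'a. newton_kernel (fst z - snd z)) \<in> borel_measurable (borel \<Otimes>\<^sub>M borel)"
    by (rule measurable_compose[where g=newton_kernel and N=borel]) auto
  show "(\<lambda>z. p (fst z) * q (snd z) * newton_kernel (fst z - snd z)) \<in> borel_measurable (lborel \<Otimes>\<^sub>M lborel)"
    by measurable
  obtain ks mq m1 where km: "0 \<le> ks" "0 \<le> mq" "0 \<le> m1"
    and ib: "\<And>x. (\<integral>\<^sup>+y. ennreal (q y * (sing (x - y) + 1 + norm (x - y))) \<partial>lborel) \<le> ennreal (ks + (1 + norm x) * mq + m1)"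
    using inner_bound[OF assms(2)] by blast
  define C where "C = kC TYPE('a)"
  have C1: "1 \<le> C" unfolding C_def by (rule kC_ge1)
  obtain mp where mp: "(\<integral>\<^sup>+z. ennreal (p z) \<partial>lborel) = ennreal mp"
    using assms(1) unfolding dens_def by (auto simp: less_top_ennreal)
  obtain m1p where m1p: "(\<integral>\<^sup>+z. ennreal (p z * norm z) \<partial>lborel) = ennreal m1p"
    using dens_first_moment[OF assms(1)] by (auto simp: less_top_ennreal)
  have "(\<integral>\<^sup>+z. ennreal (norm (p (fst z) * q (snd z) * newton_kernel (fst z - snd z))) \<partial>(lborel \<Otimes>\<^sub>M lborel))
      = (\<integral>\<^sup>+x. \<integral>\<^sup>+y. ennreal (norm (p x * q y * newton_kernel (x - y))) \<partial>lborel \<partial>lborel)"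
    by (subst lborel.nn_integral_fst[symmetric]) auto
  also have "\<dots> \<le> (\<integral>\<^sup>+x. ennreal (C * p x) * ennreal (ks + (1 + norm x) * mq + m1) \<partial>lborel)"
  proof (rule nn_integral_mono)
    fix x :: 'a
    have "(\<integral>\<^sup>+y. ennreal (norm (p x * q y * newton_kernel (x - y))) \<partial>lborel)
        \<le> (\<integral>\<^sup>+y. ennreal (C * p x) * ennreal (q y * (sing (x - y) + 1 + norm (x - y))) \<partial>lborel)"
    proof (rule nn_integral_mono)
      fix y :: 'a
      have "norm (p x * q y * newton_kernel (x - y)) = p x * q y * \<bar>newton_kernel (x - y)\<bar>"
        using p01 q01 by (simp add: abs_mult)
      also have "\<dots> \<le> p x * q y * (C * (sing (x - y) + 1 + norm (x - y)))"
        unfolding C_def using p01 q01 by (intro mult_left_mono kernel_bound) auto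
      also have "\<dots> = (C * p x) * (q y * (sing (x - y) + 1 + norm (x - y)))" by simp
      finally show "ennreal (norm (p x * q y * newton_kernel (x - y))) \<le> ennreal (C * p x) * ennreal (q y * (sing (x - y) + 1 + norm (x - y)))"
        using p01 q01 C1 sing_nonneg[of "x-y"] by (simp add: ennreal_mult[symmetric] ennreal_leI)
    qed
    also have "\<dots> = ennreal (C * p x) * (\<integral>\<^sup>+y. ennreal (q y * (sing (x - y) + 1 + norm (x - y))) \<partial>lborel)"
      by (rule nn_integral_cmult) measurable
    also have "\<dots> \<le> ennreal (C * p x) * ennreal (ks + (1 + norm x) * mq + m1)"
      by (intro mult_left_mono ib) auto
    finally show "(\<integral>\<^sup>+y. ennreal (norm (p x * q y * newton_kernel (x - y))) \<partial>lborel) \<le> ennreal (C * p x) * ennreal (ks + (1 + norm x) * mq + m1)" .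
  qed
  also have "\<dots> = (\<integral>\<^sup>+x. ennreal (C * (ks + mq + m1)) * ennreal (p x) + ennreal (C * mq) * ennreal (p x * norm x) \<partial>lborel)"
  proof (rule nn_integral_cong)
    fix x :: 'a
    have "C * p x * (ks + (1 + norm x) * mq + m1) = C * (ks + mq + m1) * p x + C * mq * (p x * norm x)"
      by (simp add: algebra_simps)
    then show "ennreal (C * p x) * ennreal (ks + (1 + norm x) * mq + m1) = ennreal (C * (ks + mq + m1)) * ennreal (p x) + ennreal (C * mq) * ennreal (p x * norm x)"
      using p01[of x] km C1 by (simp add: ennreal_mult[symmetric] ennreal_plus[symmetric] del: ennreal_plus)
  qed
  also have "\<dots> = ennreal (C * (ks + mq + m1)) * ennreal mp + ennreal (C * mq) * ennreal m1p"
    by (subst nn_integral_add) (auto simp: nn_integral_cmult mp m1p)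
  also have "\<dots> < \<infinity>" by (simp add: ennreal_mult_less_top)
  finally show "(\<integral>\<^sup>+z. ennreal (norm (p (fst z) * q (snd z) * newton_kernel (fst z - snd z))) \<partial>(lborel \<Otimes>\<^sub>M lborel)) < \<infinity>" .
qed

definition mixm :: "real \<Rightarrow> 'a measure \<Rightarrow> 'a measure \<Rightarrow> 'a measure" where
  "mixm s M N = measure_of (space M) (sets M) (\<lambda>A. ennreal (1 - s) * emeasure M A + ennreal s * emeasure N A)"

lemma sets_mixm[simp, measurable_cong]: "sets (mixm s M N) = sets M"
  unfolding mixm_def by (rule sets.sets_measure_of_eq)

lemma space_mixm[simp]: "space (mixm s M N) = space M"
  unfolding mixm_def by (simp add: space_measure_of_conv)

lemma emeasure_mixm:
  assumes N: "sets N = sets M" and A: "A \<in> sets M"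
  shows "emeasure (mixm s M N) A = ennreal (1 - s) * emeasure M A + ennreal s * emeasure N A"
  unfolding mixm_def
proof (rule emeasure_measure_of_sigma)
  show "sigma_algebra (space M) (sets M)" by (rule sets.sigma_algebra_axioms)
  show "positive (sets M) (\<lambda>A. ennreal (1 - s) * emeasure M A + ennreal s * emeasure N A)"
    unfolding positive_def by simp
  show "countably_additive (sets M) (\<lambda>A. ennreal (1 - s) * emeasure M A + ennreal s * emeasure N A)"
    unfolding countably_additive_def
  proof (intro allI impI)
    fix F :: "nat \<Rightarrow> _" assume F: "range F \<subseteq> sets M" "disjoint_family F"
    have FN: "range F \<subseteq> sets N" using F N by simp
    show "(\<Sum>i. ennreal (1 - s) * emeasure M (F i) + ennreal s * emeasure N (F i)) =
          ennreal (1 - s) * emeasure M (\<Union> (range F)) + ennreal s * emeasure N (\<Union> (range F))"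
      by (simp add: suminf_add[symmetric] ennreal_suminf_cmult suminf_emeasure F FN)
  qed
qed (use A in auto)

lemma nn_integral_mixm:
  assumes N: "sets N = sets M" and f: "f \<in> borel_measurable M"
  shows "(\<integral>\<^sup>+x. f x \<partial>mixm s M N) = ennreal (1 - s) * (\<integral>\<^sup>+x. f x \<partial>M) + ennreal s * (\<integral>\<^sup>+x. f x \<partial>N)"
  using f
proof (induct rule: borel_measurable_induct)
  case (cong f g)
  have sN: "space N = space M" using N by (rule sets_eq_imp_space_eq)
  have "(\<integral>\<^sup>+x. f x \<partial>mixm s M N) = (\<integral>\<^sup>+x. g x \<partial>mixm s M N)"
    by (intro nn_integral_cong) (simp add: cong)
  moreover have "(\<integral>\<^sup>+x. f x \<partial>M) = (\<integral>\<^sup>+x. g x \<partial>M)" by (intro nn_integral_cong) (simp add: cong)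
  moreover have "(\<integral>\<^sup>+x. f x \<partial>N) = (\<integral>\<^sup>+x. g x \<partial>N)" by (intro nn_integral_cong) (simp add: cong sN)
  ultimately show ?case using cong by simp
next
  case (set A)
  then show ?case using N by (simp add: emeasure_mixm)
next
  case (mult u c)
  have [measurable]: "u \<in> borel_measurable N" using mult N by (simp cong: measurable_cong_sets)
  show ?case using mult
    by (simp add: nn_integral_cmult distrib_left mult.left_commute measurable_cong_sets[OF refl N])
next
  case (add u v)
  have [measurable]: "u \<in> borel_measurable N" "v \<in> borel_measurable N" using add N by (simp_all cong: measurable_cong_sets)
  have [measurable]: "u \<in> borel_measurable (mixm s M N)" "v \<in> borel_measurable (mixm s M N)" using add by (simp_all cong: measurable_cong_sets)
  show ?case using add
    by (simp add: nn_integral_add distrib_left algebra_simps)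
next
  case (seq U)
  have [measurable]: "U i \<in> borel_measurable N" "U i \<in> borel_measurable (mixm s M N)" for i
    using seq N by (simp_all cong: measurable_cong_sets)
  have inc: "incseq (\<lambda>i. \<integral>\<^sup>+x. U i x \<partial>K)" for K using seq
    by (intro monoI nn_integral_mono) (auto simp: incseq_def le_fun_def)
  have "(\<integral>\<^sup>+x. (\<Squnion> range U) x \<partial>K) = (\<Squnion>i. \<integral>\<^sup>+x. U i x \<partial>K)" if "\<And>i. U i \<in> borel_measurable K" for K
    using seq that by (simp add: nn_integral_monotone_convergence_SUP[symmetric] SUP_apply image_comp)
  then have eqs: "(\<integral>\<^sup>+x. (\<Squnion> range U) x \<partial>mixm s M N) = (\<Squnion>i. \<integral>\<^sup>+x. U i x \<partial>mixm s M N)"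
    "(\<integral>\<^sup>+x. (\<Squnion> range U) x \<partial>M) = (\<Squnion>i. \<integral>\<^sup>+x. U i x \<partial>M)"
    "(\<integral>\<^sup>+x. (\<Squnion> range U) x \<partial>N) = (\<Squnion>i. \<integral>\<^sup>+x. U i x \<partial>N)"
    using seq by auto
  have "(\<Squnion>i. \<integral>\<^sup>+x. U i x \<partial>mixm s M N) = (\<Squnion>i. ennreal (1 - s) * (\<integral>\<^sup>+x. U i x \<partial>M) + ennreal s * (\<integral>\<^sup>+x. U i x \<partial>N))"
    using seq by simp
  also have "\<dots> = (\<Squnion>i. ennreal (1 - s) * (\<integral>\<^sup>+x. U i x \<partial>M)) + (\<Squnion>i. ennreal s * (\<integral>\<^sup>+x. U i x \<partial>N))"
    by (rule ennreal_SUP_add) (auto intro!: mult_left_mono simp: incseq_def inc[THEN incseqD])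
  also have "\<dots> = ennreal (1 - s) * (\<Squnion>i. \<integral>\<^sup>+x. U i x \<partial>M) + ennreal s * (\<Squnion>i. \<integral>\<^sup>+x. U i x \<partial>N)"
    by (simp add: SUP_mult_left_ennreal)
  finally show ?case using eqs by simp
qed

definition cost :: "('a::euclidean_space \<times> 'a) measure \<Rightarrow> ennreal" where
  "cost \<gamma> = (\<integral>\<^sup>+ p. ennreal ((dist (fst p) (snd p))\<^sup>2) \<partial>\<gamma>)"

definition Icost :: "'a::euclidean_space measure \<Rightarrow> 'a measure \<Rightarrow> ennreal" where
  "Icost \<mu> \<nu> = (INF \<gamma>\<in>couplings \<mu> \<nu>. cost \<gamma>)"

lemma W2_sq: "(W2 \<mu> \<nu>)\<^sup>2 = enn2real (Icost \<mu> \<nu>)"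
  unfolding W2_def Icost_def cost_def by simp

lemma P2_D:
  assumes "\<mu> \<in> P2"
  shows "prob_space \<mu>" "sets \<mu> = sets borel" "space \<mu> = UNIV"
    "(\<integral>\<^sup>+ x. ennreal ((norm x)\<^sup>2) \<partial>\<mu>) < \<infinity>"
proof -
  show "prob_space \<mu>" "sets \<mu> = sets borel" "(\<integral>\<^sup>+ x. ennreal ((norm x)\<^sup>2) \<partial>\<mu>) < \<infinity>"
    using assms unfolding P2_def by auto
  then show "space \<mu> = UNIV" using sets_eq_imp_space_eq by fastforce
qed

lemma prod_coupling:
  assumes "\<mu> \<in> P2" "\<nu> \<in> P2"
  shows "\<mu> \<Otimes>\<^sub>M \<nu> \<in> couplings \<mu> \<nu>"
proof -
  note m = P2_D[OF assms(1)] and n = P2_D[OF assms(2)]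
  interpret mu: prob_space \<mu> by (rule m(1))
  interpret nu: prob_space \<nu> by (rule n(1))
  interpret pair_prob_space \<mu> \<nu> ..
  have sp: "sets (\<mu> \<Otimes>\<^sub>M \<nu>) = sets (borel \<Otimes>\<^sub>M borel)"
    by (rule sets_pair_measure_cong) (simp_all add: m n)
  have fst_m: "fst \<in> measurable (\<mu> \<Otimes>\<^sub>M \<nu>) borel"
    using measurable_fst[of \<mu> \<nu>] m by (simp cong: measurable_cong_sets)
  have snd_m: "snd \<in> measurable (\<mu> \<Otimes>\<^sub>M \<nu>) borel"
    using measurable_snd[of \<mu> \<nu>] n by (simp cong: measurable_cong_sets)
  have "distr (\<mu> \<Otimes>\<^sub>M \<nu>) borel fst = \<mu>"
  proof (rule measure_eqI)
    show "sets (distr (\<mu> \<Otimes>\<^sub>M \<nu>) borel fst) = sets \<mu>" using m by simp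
    fix A assume A: "A \<in> sets (distr (\<mu> \<Otimes>\<^sub>M \<nu>) borel fst)"
    then have A': "A \<in> sets \<mu>" using m by simp
    have "fst -` A \<inter> space (\<mu> \<Otimes>\<^sub>M \<nu>) = A \<times> space \<nu>"
      by (auto simp: space_pair_measure m n)
    then show "emeasure (distr (\<mu> \<Otimes>\<^sub>M \<nu>) borel fst) A = emeasure \<mu> A"
      using A A' fst_m by (simp add: emeasure_distr nu.emeasure_pair_measure_Times nu.emeasure_space_1)
  qed
  moreover have "distr (\<mu> \<Otimes>\<^sub>M \<nu>) borel snd = \<nu>"
  proof (rule measure_eqI)
    show "sets (distr (\<mu> \<Otimes>\<^sub>M \<nu>) borel snd) = sets \<nu>" using n by simp
    fix A assume A: "A \<in> sets (distr (\<mu> \<Otimes>\<^sub>M \<nu>) borel snd)"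
    then have A': "A \<in> sets \<nu>" using n by simp
    have "snd -` A \<inter> space (\<mu> \<Otimes>\<^sub>M \<nu>) = space \<mu> \<times> A"
      by (auto simp: space_pair_measure m n)
    then show "emeasure (distr (\<mu> \<Otimes>\<^sub>M \<nu>) borel snd) A = emeasure \<nu> A"
      using A A' snd_m by (simp add: emeasure_distr nu.emeasure_pair_measure_Times mu.emeasure_space_1)
  qed
  ultimately show ?thesis unfolding couplings_def using sp by auto
qed

lemma Icost_finite:
  assumes "\<mu> \<in> P2" "\<nu> \<in> P2"
  shows "Icost \<mu> \<nu> < \<infinity>"
proof -
  note m = P2_D[OF assms(1)] and n = P2_D[OF assms(2)]
  interpret mu: prob_space \<mu> by (rule m(1))
  interpret nu: prob_space \<nu> by (rule n(1))
  have mm[measurable]: "(\<lambda>x. ennreal ((norm x)\<^sup>2)) \<in> borel_measurable \<mu>" "(\<lambda>x. ennreal ((norm x)\<^sup>2)) \<in> borel_measurable \<nu>"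
    using m n by (simp_all cong: measurable_cong_sets)
  have "Icost \<mu> \<nu> \<le> cost (\<mu> \<Otimes>\<^sub>M \<nu>)"
    unfolding Icost_def by (rule INF_lower) (rule prod_coupling[OF assms])
  also have "\<dots> = (\<integral>\<^sup>+x. \<integral>\<^sup>+y. ennreal ((dist x y)\<^sup>2) \<partial>\<nu> \<partial>\<mu>)"
    unfolding cost_def
  proof (subst nu.nn_integral_fst[symmetric])
    have "(\<lambda>p::'a\<times>'a. ennreal ((dist (fst p) (snd p))\<^sup>2)) \<in> borel_measurable (borel \<Otimes>\<^sub>M borel)" by measurable
    then show "(\<lambda>p::'a\<times>'a. ennreal ((dist (fst p) (snd p))\<^sup>2)) \<in> borel_measurable (\<mu> \<Otimes>\<^sub>M \<nu>)"
      by (subst measurable_cong_sets[OF sets_pair_measure_cong[OF m(2) n(2)] refl])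
  qed simp
  also have "\<dots> \<le> (\<integral>\<^sup>+x. \<integral>\<^sup>+y. 2 * ennreal ((norm x)\<^sup>2) + 2 * ennreal ((norm y)\<^sup>2) \<partial>\<nu> \<partial>\<mu>)"
  proof (intro nn_integral_mono)
    fix x y :: 'a
    have "(dist x y)\<^sup>2 \<le> 2 * (norm x)\<^sup>2 + 2 * (norm y)\<^sup>2"
    proof -
      have "dist x y \<le> norm x + norm y" by (simp add: dist_norm norm_triangle_ineq4)
      then have "(dist x y)\<^sup>2 \<le> (norm x + norm y)\<^sup>2" by (simp add: power_mono)
      also have "\<dots> \<le> 2 * (norm x)\<^sup>2 + 2 * (norm y)\<^sup>2"
        by (smt (verit, best) power2_sum sum_squares_bound)
      finally show ?thesis .
    qed
    then have "ennreal ((dist x y)\<^sup>2) \<le> ennreal (2 * (norm x)\<^sup>2 + 2 * (norm y)\<^sup>2)" by (rule ennreal_leI)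
    also have "\<dots> = 2 * ennreal ((norm x)\<^sup>2) + 2 * ennreal ((norm y)\<^sup>2)"
      by (simp add: ennreal_plus ennreal_mult)
    finally show "ennreal ((dist x y)\<^sup>2) \<le> 2 * ennreal ((norm x)\<^sup>2) + 2 * ennreal ((norm y)\<^sup>2)" .
  qed
  also have "\<dots> = (\<integral>\<^sup>+x. 2 * ennreal ((norm x)\<^sup>2) + 2 * (\<integral>\<^sup>+y. ennreal ((norm y)\<^sup>2) \<partial>\<nu>) \<partial>\<mu>)"
    by (intro nn_integral_cong) (simp add: nn_integral_add nn_integral_cmult nu.emeasure_space_1 mm)
  also have "\<dots> = 2 * (\<integral>\<^sup>+x. ennreal ((norm x)\<^sup>2) \<partial>\<mu>) + 2 * (\<integral>\<^sup>+y. ennreal ((norm y)\<^sup>2) \<partial>\<nu>)"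
    by (simp add: nn_integral_add nn_integral_cmult mu.emeasure_space_1 mm)
  also have "\<dots> < \<infinity>" using m(4) n(4) by (simp add: ennreal_mult_less_top)
  finally show ?thesis .
qed

lemma mix_coupling:
  assumes g1: "\<gamma>1 \<in> couplings \<rho> a" and g2: "\<gamma>2 \<in> couplings \<rho> b"
    and t: "0 \<le> t" "t \<le> 1"
    and sc: "sets c = sets borel" and ec: "\<And>A. A \<in> sets borel \<Longrightarrow> emeasure c A = ennreal (1 - t) * emeasure a A + ennreal t * emeasure b A"
    and sr: "sets \<rho> = sets borel"
  shows "mixm t \<gamma>1 \<gamma>2 \<in> couplings \<rho> c"
    and "cost (mixm t \<gamma>1 \<gamma>2) = ennreal (1 - t) * cost \<gamma>1 + ennreal t * cost \<gamma>2"
proof -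
  have s1: "sets \<gamma>1 = sets (borel \<Otimes>\<^sub>M borel)" and m1: "distr \<gamma>1 borel fst = \<rho>" "distr \<gamma>1 borel snd = a"
    using g1 unfolding couplings_def by auto
  have s2: "sets \<gamma>2 = sets (borel \<Otimes>\<^sub>M borel)" and m2: "distr \<gamma>2 borel fst = \<rho>" "distr \<gamma>2 borel snd = b"
    using g2 unfolding couplings_def by auto
  have s21: "sets \<gamma>2 = sets \<gamma>1" using s1 s2 by simp
  have sp2: "space \<gamma>2 = space \<gamma>1" using s21 by (rule sets_eq_imp_space_eq)
  have fm: "fst \<in> measurable \<gamma>1 borel" "snd \<in> measurable \<gamma>1 borel"
    "fst \<in> measurable \<gamma>2 borel" "snd \<in> measurable \<gamma>2 borel"
    by (simp_all add: measurable_cong_sets[OF s1 refl] measurable_cong_sets[OF s2 refl])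
  have fmm: "fst \<in> measurable (mixm t \<gamma>1 \<gamma>2) borel" "snd \<in> measurable (mixm t \<gamma>1 \<gamma>2) borel"
    using fm by (simp_all add: measurable_cong_sets[OF sets_mixm refl])
  have sa: "sets a = sets borel" using m1(2) by (metis sets_distr)
  have sb: "sets b = sets borel" using m2(2) by (metis sets_distr)
  have e1: "emeasure \<gamma>1 (f -` A \<inter> space \<gamma>1) = emeasure (distr \<gamma>1 borel f) A" if "f \<in> measurable \<gamma>1 borel" "A \<in> sets borel" for f :: "_ \<Rightarrow> 'a" and A
    using that by (simp add: emeasure_distr)
  have e2: "emeasure \<gamma>2 (f -` A \<inter> space \<gamma>1) = emeasure (distr \<gamma>2 borel f) A" if "f \<in> measurable \<gamma>2 borel" "A \<in> sets borel" for f :: "_ \<Rightarrow> 'a" and A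
    using that sp2 by (simp add: emeasure_distr)
  have pre: "f -` A \<inter> space \<gamma>1 \<in> sets \<gamma>1" if "f \<in> measurable \<gamma>1 borel" "A \<in> sets borel" for f :: "_ \<Rightarrow> 'a" and A
    using that by (rule measurable_sets)
  have one: "ennreal (1 - t) * x + ennreal t * x = x" for x :: ennreal
  proof -
    have "ennreal (1 - t) * x + ennreal t * x = (ennreal (1 - t) + ennreal t) * x" by (simp add: distrib_right)
    also have "ennreal (1 - t) + ennreal t = 1" using t by (simp add: ennreal_plus[symmetric] del: ennreal_plus)
    finally show ?thesis by simp
  qed
  have "distr (mixm t \<gamma>1 \<gamma>2) borel fst = \<rho>"
  proof (rule measure_eqI)
    show "sets (distr (mixm t \<gamma>1 \<gamma>2) borel fst) = sets \<rho>" using sr by simp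
    fix A assume "A \<in> sets (distr (mixm t \<gamma>1 \<gamma>2) borel fst)"
    then have A: "A \<in> sets borel" by simp
    have "emeasure (distr (mixm t \<gamma>1 \<gamma>2) borel fst) A = emeasure (mixm t \<gamma>1 \<gamma>2) (fst -` A \<inter> space \<gamma>1)"
      using A fmm by (simp add: emeasure_distr)
    also have "\<dots> = ennreal (1 - t) * emeasure \<rho> A + ennreal t * emeasure \<rho> A"
      using A fm pre[OF fm(1) A] s21 by (simp add: emeasure_mixm e1 e2 m1 m2)
    finally show "emeasure (distr (mixm t \<gamma>1 \<gamma>2) borel fst) A = emeasure \<rho> A" by (simp add: one)
  qed
  moreover have "distr (mixm t \<gamma>1 \<gamma>2) borel snd = c"
  proof (rule measure_eqI)
    show "sets (distr (mixm t \<gamma>1 \<gamma>2) borel snd) = sets c" using sc by simp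
    fix A assume "A \<in> sets (distr (mixm t \<gamma>1 \<gamma>2) borel snd)"
    then have A: "A \<in> sets borel" by simp
    have "emeasure (distr (mixm t \<gamma>1 \<gamma>2) borel snd) A = emeasure (mixm t \<gamma>1 \<gamma>2) (snd -` A \<inter> space \<gamma>1)"
      using A fmm by (simp add: emeasure_distr)
    also have "\<dots> = ennreal (1 - t) * emeasure a A + ennreal t * emeasure b A"
      using A fm pre[OF fm(2) A] s21 by (simp add: emeasure_mixm e1 e2 m1 m2)
    finally show "emeasure (distr (mixm t \<gamma>1 \<gamma>2) borel snd) A = emeasure c A" using ec[OF A] by simp
  qed
  ultimately show "mixm t \<gamma>1 \<gamma>2 \<in> couplings \<rho> c" unfolding couplings_def using s1 by simp
  have "(\<lambda>p::'a\<times>'a. ennreal ((dist (fst p) (snd p))\<^sup>2)) \<in> borel_measurable (borel \<Otimes>\<^sub>M borel)" by measurable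
  then have "(\<lambda>p::'a\<times>'a. ennreal ((dist (fst p) (snd p))\<^sup>2)) \<in> borel_measurable \<gamma>1"
    by (simp add: measurable_cong_sets[OF s1 refl])
  then show "cost (mixm t \<gamma>1 \<gamma>2) = ennreal (1 - t) * cost \<gamma>1 + ennreal t * cost \<gamma>2"
    unfolding cost_def by (rule nn_integral_mixm[OF s21])
qed

lemma W2_convex:
  assumes "\<rho> \<in> P2" "a \<in> P2" "b \<in> P2" and t: "0 \<le> t" "t \<le> 1"
    and sc: "sets c = sets borel" and ec: "\<And>A. A \<in> sets borel \<Longrightarrow> emeasure c A = ennreal (1 - t) * emeasure a A + ennreal t * emeasure b A"
  shows "(W2 \<rho> c)\<^sup>2 \<le> (1 - t) * (W2 \<rho> a)\<^sup>2 + t * (W2 \<rho> b)\<^sup>2"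
proof -
  have sr: "sets \<rho> = sets borel" using P2_D[OF assms(1)] by simp
  obtain ia where ia: "0 \<le> ia" "Icost \<rho> a = ennreal ia"
    using Icost_finite[OF assms(1,2)] by (auto simp: less_top_ennreal)
  obtain ib where ib: "0 \<le> ib" "Icost \<rho> b = ennreal ib"
    using Icost_finite[OF assms(1,3)] by (auto simp: less_top_ennreal)
  have "Icost \<rho> c \<le> ennreal ((1 - t) * ia + t * ib)"
  proof (rule ennreal_le_epsilon)
    fix e :: real assume e: "0 < e"
    obtain \<gamma>1 where g1: "\<gamma>1 \<in> couplings \<rho> a" "cost \<gamma>1 < Icost \<rho> a + ennreal e"
      using INF_approx_ennreal[OF e, of "Icost \<rho> a" cost "couplings \<rho> a"] ia unfolding Icost_def by auto
    obtain \<gamma>2 where g2: "\<gamma>2 \<in> couplings \<rho> b" "cost \<gamma>2 < Icost \<rho> b + ennreal e"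
      using INF_approx_ennreal[OF e, of "Icost \<rho> b" cost "couplings \<rho> b"] ib unfolding Icost_def by auto
    have "Icost \<rho> c \<le> cost (mixm t \<gamma>1 \<gamma>2)"
      unfolding Icost_def by (rule INF_lower) (rule mix_coupling(1)[OF g1(1) g2(1) t sc ec sr])
    also have "\<dots> = ennreal (1 - t) * cost \<gamma>1 + ennreal t * cost \<gamma>2"
      by (rule mix_coupling(2)[OF g1(1) g2(1) t sc ec sr])
    also have "\<dots> \<le> ennreal (1 - t) * (ennreal ia + ennreal e) + ennreal t * (ennreal ib + ennreal e)"
      using g1(2) g2(2) ia ib by (intro add_mono mult_left_mono) auto
    also have "\<dots> = ennreal ((1 - t) * ia + t * ib) + ennreal e"
    proof -
      have "(1 - t) * (ia + e) + t * (ib + e) = ((1 - t) * ia + t * ib) + e" by (simp add: algebra_simps)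
      then show ?thesis using t ia ib e
        by (simp add: ennreal_plus[symmetric] ennreal_mult[symmetric] del: ennreal_plus)
    qed
    finally show "Icost \<rho> c \<le> ennreal ((1 - t) * ia + t * ib) + ennreal e" .
  qed
  then have "enn2real (Icost \<rho> c) \<le> (1 - t) * ia + t * ib"
    using t ia ib by (metis enn2real_ennreal enn2real_mono ennreal_less_top add_nonneg_nonneg mult_nonneg_nonneg diff_ge_0_iff_ge)
  then show ?thesis unfolding W2_sq using ia ib by simp
qed

definition Af :: "('a::euclidean_space \<Rightarrow> real) \<Rightarrow> ('a \<Rightarrow> real) \<Rightarrow> real" where
  "Af p q = (\<integral>x. p x * (\<integral>y. q y * newton_kernel (x - y) \<partial>lborel) \<partial>lborel)"

definition Hk :: "('a::euclidean_space \<Rightarrow> real) \<Rightarrow> ('a \<Rightarrow> real) \<Rightarrow> 'a \<times> 'a \<Rightarrow> real" where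
  "Hk p q = (\<lambda>z. p (fst z) * q (snd z) * newton_kernel (fst z - snd z))"

lemma newton_kernel_uminus: "newton_kernel (- z) = newton_kernel z"
  unfolding newton_kernel_def by (simp only: norm_minus_cancel)

lemma nk_diff_measurable[measurable]:
  "(\<lambda>z::'a::euclidean_space\<times>'a. newton_kernel (fst z - snd z)) \<in> borel_measurable (borel \<Otimes>\<^sub>M borel)"
  by (rule measurable_compose[where g=newton_kernel and N=borel]) auto

lemma Af_prod:
  assumes "dens p" "dens q"
  shows "Af p q = integral\<^sup>L (lborel \<Otimes>\<^sub>M lborel) (Hk p q)"
proof -
  have "integral\<^sup>L (lborel \<Otimes>\<^sub>M lborel) (Hk p q) = (\<integral>x. \<integral>y. Hk p q (x, y) \<partial>lborel \<partial>lborel)"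
    using kernel_integrable[OF assms] unfolding Hk_def
    by (subst lborel_pair.integral_fst'[symmetric]) auto
  also have "\<dots> = Af p q"
    unfolding Af_def Hk_def by (simp add: mult.assoc integral_mult_right_zero)
  finally show ?thesis ..
qed

lemma Hk_measurable[measurable]:
  assumes "dens p" "dens q"
  shows "Hk p q \<in> borel_measurable (lborel \<Otimes>\<^sub>M lborel)"
  using kernel_integrable[OF assms] unfolding Hk_def by auto

lemma Af_sym:
  assumes "dens p" "dens q"
  shows "Af p q = Af q p"
proof -
  have "Af q p = integral\<^sup>L (lborel \<Otimes>\<^sub>M lborel) (Hk q p)" by (rule Af_prod[OF assms(2,1)])
  also have "\<dots> = (\<integral>(x,y). Hk p q (y, x) \<partial>(lborel \<Otimes>\<^sub>M lborel))"
  proof (intro Bochner_Integration.integral_cong refl)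
    fix z :: "'a \<times> 'a"
    have "newton_kernel (snd z - fst z) = newton_kernel (fst z - snd z)"
      using newton_kernel_uminus[of "fst z - snd z"] by simp
    then show "Hk q p z = (case z of (x, y) \<Rightarrow> Hk p q (y, x))"
      unfolding Hk_def by (cases z) simp
  qed
  also have "\<dots> = integral\<^sup>L (lborel \<Otimes>\<^sub>M lborel) (Hk p q)"
    by (rule lborel_pair.integral_product_swap) (rule Hk_measurable[OF assms])
  also have "\<dots> = Af p q" by (rule Af_prod[OF assms, symmetric])
  finally show ?thesis ..
qed

lemma nn_lin:
  fixes F G h :: "'a::euclidean_space \<Rightarrow> real"
  assumes [measurable]: "F \<in> borel_measurable borel" "G \<in> borel_measurable borel" "h \<in> borel_measurable borel"
    and "\<And>x. 0 \<le> F x" "\<And>x. 0 \<le> G x" "\<And>x. 0 \<le> h x" "0 \<le> t" "t \<le> 1"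
  shows "(\<integral>\<^sup>+x. ennreal (((1 - t) * F x + t * G x) * h x) \<partial>lborel)
     = ennreal (1 - t) * (\<integral>\<^sup>+x. ennreal (F x * h x) \<partial>lborel) + ennreal t * (\<integral>\<^sup>+x. ennreal (G x * h x) \<partial>lborel)"
proof -
  have "(\<integral>\<^sup>+x. ennreal (((1 - t) * F x + t * G x) * h x) \<partial>lborel)
     = (\<integral>\<^sup>+x. ennreal (1 - t) * ennreal (F x * h x) + ennreal t * ennreal (G x * h x) \<partial>lborel)"
  proof (intro nn_integral_cong)
    fix x
    have "((1 - t) * F x + t * G x) * h x = (1 - t) * (F x * h x) + t * (G x * h x)" by (simp add: algebra_simps)
    then show "ennreal (((1 - t) * F x + t * G x) * h x) = ennreal (1 - t) * ennreal (F x * h x) + ennreal t * ennreal (G x * h x)"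
      using assms(4)[of x] assms(5)[of x] assms(6)[of x] assms(7,8) by (simp add: ennreal_plus[symmetric] ennreal_mult[symmetric] del: ennreal_plus)
  qed
  also have "\<dots> = ennreal (1 - t) * (\<integral>\<^sup>+x. ennreal (F x * h x) \<partial>lborel) + ennreal t * (\<integral>\<^sup>+x. ennreal (G x * h x) \<partial>lborel)"
    by (simp add: nn_integral_add nn_integral_cmult)
  finally show ?thesis .
qed

lemma dens_mix:
  assumes F: "dens F" and G: "dens G" and t: "0 \<le> t" "t \<le> 1"
  shows "dens (\<lambda>x. (1 - t) * F x + t * G x)"
proof -
  have [measurable]: "F \<in> borel_measurable borel" "G \<in> borel_measurable borel"
    and F01: "\<And>x. 0 \<le> F x" "\<And>x. F x \<le> 1" and G01: "\<And>x. 0 \<le> G x" "\<And>x. G x \<le> 1"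
    using F G unfolding dens_def by auto
  have b: "0 \<le> (1 - t) * F x + t * G x \<and> (1 - t) * F x + t * G x \<le> 1" for x
  proof -
    have "(1 - t) * F x \<le> (1 - t) * 1" using F01 t by (intro mult_left_mono) auto
    moreover have "t * G x \<le> t * 1" using G01 t by (intro mult_left_mono) auto
    ultimately show ?thesis using F01[of x] G01[of x] t by simp
  qed
  have i1: "(\<integral>\<^sup>+x. ennreal ((1 - t) * F x + t * G x) \<partial>lborel) < \<infinity>"
    using nn_lin[where F=F and G=G and h="\<lambda>_. 1" and t=t] F01 G01 t F G unfolding dens_def by (simp add: ennreal_mult_less_top)
  have i2: "(\<integral>\<^sup>+x. ennreal (((1 - t) * F x + t * G x) * (norm x)\<^sup>2) \<partial>lborel) < \<infinity>"
    using nn_lin[where F=F and G=G and h="\<lambda>x. (norm x)\<^sup>2" and t=t] F01 G01 t F G unfolding dens_def by (simp add: ennreal_mult_less_top)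
  show ?thesis unfolding dens_def using b i1 i2 by auto
qed

lemma Af_mix:
  assumes F: "dens F" and G: "dens G" and t: "0 \<le> t" "t \<le> 1"
  defines "P \<equiv> (\<lambda>x. (1 - t) * F x + t * G x)"
  shows "Af P P = (1 - t)\<^sup>2 * Af F F + 2 * t * (1 - t) * Af G F + t\<^sup>2 * Af G G"
proof -
  have P: "dens P" unfolding P_def by (rule dens_mix[OF F G t])
  have i: "integrable (lborel \<Otimes>\<^sub>M lborel) (Hk F F)" "integrable (lborel \<Otimes>\<^sub>M lborel) (Hk F G)"
    "integrable (lborel \<Otimes>\<^sub>M lborel) (Hk G F)" "integrable (lborel \<Otimes>\<^sub>M lborel) (Hk G G)"
    using kernel_integrable[OF F F] kernel_integrable[OF F G] kernel_integrable[OF G F] kernel_integrable[OF G G]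
    unfolding Hk_def by auto
  have "Af P P = integral\<^sup>L (lborel \<Otimes>\<^sub>M lborel) (Hk P P)" by (rule Af_prod[OF P P])
  also have "\<dots> = (\<integral>z. (1 - t)\<^sup>2 * Hk F F z + ((1 - t) * t * Hk F G z + (t * (1 - t) * Hk G F z + t\<^sup>2 * Hk G G z)) \<partial>(lborel \<Otimes>\<^sub>M lborel))"
    by (intro Bochner_Integration.integral_cong refl) (simp add: Hk_def P_def algebra_simps power2_eq_square)
  also have "\<dots> = (1 - t)\<^sup>2 * integral\<^sup>L (lborel \<Otimes>\<^sub>M lborel) (Hk F F) + ((1 - t) * t * integral\<^sup>L (lborel \<Otimes>\<^sub>M lborel) (Hk F G)
       + (t * (1 - t) * integral\<^sup>L (lborel \<Otimes>\<^sub>M lborel) (Hk G F) + t\<^sup>2 * integral\<^sup>L (lborel \<Otimes>\<^sub>M lborel) (Hk G G)))"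
    using i by (simp add: integral_add integral_mult_right_zero)
  also have "\<dots> = (1 - t)\<^sup>2 * Af F F + ((1 - t) * t * Af F G + (t * (1 - t) * Af G F + t\<^sup>2 * Af G G))"
    by (simp add: Af_prod F G)
  also have "\<dots> = (1 - t)\<^sup>2 * Af F F + 2 * t * (1 - t) * Af G F + t\<^sup>2 * Af G G"
    using Af_sym[OF F G] by (simp add: algebra_simps)
  finally show ?thesis .
qed

lemma newton_pot_density:
  assumes "dens p"
  shows "newton_pot (density lborel p) x = (\<integral>y. p y * newton_kernel (x - y) \<partial>lborel)"
proof -
  have [measurable]: "p \<in> borel_measurable borel" and p0: "\<And>x. 0 \<le> p x" using assms unfolding dens_def by auto
  show ?thesis unfolding newton_pot_def
    by (subst integral_density) (auto simp: p0)
qed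

lemma energy_density:
  assumes p: "dens p" and q: "dens q"
  shows "(\<integral>x. newton_pot (density lborel q) x \<partial>density lborel p) = Af p q"
proof -
  have [measurable]: "p \<in> borel_measurable borel" "q \<in> borel_measurable borel" and p0: "\<And>x. 0 \<le> p x"
    using p q unfolding dens_def by auto
  have eq: "newton_pot (density lborel q) = (\<lambda>x. \<integral>y. q y * newton_kernel (x - y) \<partial>lborel)"
    using newton_pot_density[OF q] by auto
  have meas: "(\<lambda>x. \<integral>y. q y * newton_kernel (x - y) \<partial>lborel) \<in> borel_measurable borel"
  proof (rule lborel.borel_measurable_lebesgue_integral[where f="\<lambda>x y. q y * newton_kernel (x - y)"])
    have "(\<lambda>z::'a\<times>'a. q (snd z) * newton_kernel (fst z - snd z)) \<in> borel_measurable (borel \<Otimes>\<^sub>M borel)"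
      by measurable
    then show "(\<lambda>(x, y). q y * newton_kernel (x - y)) \<in> borel_measurable (borel \<Otimes>\<^sub>M lborel)"
      by (simp add: case_prod_beta' measurable_cong_sets[OF sets_pair_measure_cong[OF refl sets_lborel] refl])
  qed
  show ?thesis unfolding eq Af_def
    using meas by (subst integral_density) (auto simp: p0)
qed

lemma lin_lim:
  fixes D E :: real
  assumes h: "\<And>t. 0 < t \<Longrightarrow> t \<le> 1 \<Longrightarrow> 0 \<le> t * D + t\<^sup>2 * E"
  shows "0 \<le> D"
proof (rule ccontr)
  assume "\<not> 0 \<le> D"
  then have D: "D < 0" by simp
  define t where "t = min 1 (- D / (2 * (\<bar>E\<bar> + 1)))"
  have "0 < - D / (2 * (\<bar>E\<bar> + 1))" using D by (intro divide_pos_pos) auto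
  then have t0: "0 < t" unfolding t_def by simp
  have t1: "t \<le> 1" unfolding t_def by simp
  have "t \<le> - D / (2 * (\<bar>E\<bar> + 1))" unfolding t_def by simp
  moreover have k: "0 < 2 * (\<bar>E\<bar> + 1)" by simp
  ultimately have "t * (2 * (\<bar>E\<bar> + 1)) \<le> - D" by (metis pos_le_divide_eq)
  moreover have "t * (2 * (\<bar>E\<bar> + 1)) = 2 * (t * \<bar>E\<bar>) + 2 * t" by (simp add: algebra_simps)
  ultimately have tE: "t * \<bar>E\<bar> \<le> - D / 2" using t0 by linarith
  have "t * E \<le> t * \<bar>E\<bar>" using t0 by (simp add: mult_left_mono)
  then have "D + t * E < 0" using tE D by linarith
  then have "t * (D + t * E) < 0" using t0 by (simp add: mult_pos_neg)
  moreover have "t * (D + t * E) = t * D + t\<^sup>2 * E" by (simp add: algebra_simps power2_eq_square)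
  ultimately show False using h[OF t0 t1] by linarith
qed

lemma dens_of_P2:
  assumes "\<rho> \<in> P2" "dens_le_one \<rho>"
  obtains F where "dens F" "\<rho> = density lborel F" "(\<integral>\<^sup>+x. ennreal (F x) \<partial>lborel) = 1"
proof -
  obtain f where f[measurable]: "f \<in> borel_measurable borel" and f1: "\<And>x. f x \<le> 1" and rf: "\<rho> = density lborel f"
    using assms(2) unfolding dens_le_one_def by auto
  define F where "F x = enn2real (f x)" for x
  have [measurable]: "F \<in> borel_measurable borel" unfolding F_def by measurable
  have fF: "f x = ennreal (F x)" for x
    unfolding F_def using f1[of x] by (simp add: ennreal_enn2real_if) (metis ennreal_one_less_top order.strict_trans1 top.not_eq_extremum)
  have "f = (\<lambda>x. ennreal (F x))" using fF by auto
  then have rF: "\<rho> = density lborel F" unfolding rf by simp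
  note m = P2_D[OF assms(1)]
  interpret prob_space \<rho> by (rule m(1))
  have "(\<integral>\<^sup>+x. ennreal (F x) \<partial>lborel) = emeasure \<rho> (space \<rho>)"
    unfolding m(3) by (subst rF) (simp add: emeasure_density)
  also have "\<dots> = 1" by (rule emeasure_space_1)
  finally have one: "(\<integral>\<^sup>+x. ennreal (F x) \<partial>lborel) = 1" .
  have "(\<integral>\<^sup>+x. ennreal (F x * (norm x)\<^sup>2) \<partial>lborel) = (\<integral>\<^sup>+ x. ennreal ((norm x)\<^sup>2) \<partial>\<rho>)"
    by (subst rF) (simp add: nn_integral_density ennreal_mult F_def enn2real_nonneg)
  then have mom: "(\<integral>\<^sup>+x. ennreal (F x * (norm x)\<^sup>2) \<partial>lborel) < \<infinity>" using m(4) by simp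
  have "\<And>x. F x \<le> 1" unfolding F_def using f1 by (metis enn2real_1 enn2real_mono ennreal_one_less_top)
  then have "dens F" unfolding dens_def using one mom by (auto simp: F_def)
  then show ?thesis using that rF one by blast
qed

lemma density_P2:
  assumes "dens P" "(\<integral>\<^sup>+x. ennreal (P x) \<partial>lborel) = 1"
  shows "density lborel P \<in> P2" and "dens_le_one (density lborel P)"
proof -
  have [measurable]: "P \<in> borel_measurable borel" and P01: "\<And>x. 0 \<le> P x" "\<And>x. P x \<le> 1"
    using assms unfolding dens_def by auto
  have "prob_space (density lborel P)"
    by (rule prob_spaceI) (simp add: emeasure_density assms(2))
  moreover have "(\<integral>\<^sup>+ x. ennreal ((norm x)\<^sup>2) \<partial>density lborel P) < \<infinity>"
    using assms(1) unfolding dens_def by (simp add: nn_integral_density ennreal_mult P01)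
  ultimately show "density lborel P \<in> P2" unfolding P2_def by simp
  show "dens_le_one (density lborel P)" unfolding dens_le_one_def
    by (rule bexI[where x="\<lambda>x. ennreal (P x)"]) (auto simp: P01)
qed

lemma emeasure_density_ind:
  assumes [measurable]: "P \<in> borel_measurable borel" and "A \<in> sets borel" "\<And>x. 0 \<le> P x"
  shows "emeasure (density lborel P) A = (\<integral>\<^sup>+x. ennreal (P x * indicator A x) \<partial>lborel)"
  using assms by (simp add: emeasure_density ennreal_mult' ennreal_indicator)


theorem lemma2p18:
  fixes \<tau> :: real and \<rho> \<rho>\<^sub>\<tau> :: "'a::euclidean_space measure"
  assumes "\<tau> > 0" and "\<rho> \<in> P2"
    and "\<rho>\<^sub>\<tau> \<in> argmin_P2 (\<lambda>\<nu>. ereal ((W2 \<rho> \<nu>)\<^sup>2 / (2 * \<tau>)) + E_inf \<nu>)"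
  shows "\<rho>\<^sub>\<tau> \<in> argmin_P2 (\<lambda>\<nu>. ereal ((W2 \<rho> \<nu>)\<^sup>2 / (2 * \<tau>)) + E_inf_tilde \<nu> \<rho>\<^sub>\<tau>)"
proof -
  have rt: "\<rho>\<^sub>\<tau> \<in> P2" and mini: "\<And>\<nu>. \<nu> \<in> P2 \<Longrightarrow> ereal ((W2 \<rho> \<rho>\<^sub>\<tau>)\<^sup>2 / (2 * \<tau>)) + E_inf \<rho>\<^sub>\<tau> \<le> ereal ((W2 \<rho> \<nu>)\<^sup>2 / (2 * \<tau>)) + E_inf \<nu>"
    using assms(3) unfolding argmin_P2_def by auto
  have "ereal ((W2 \<rho> \<rho>\<^sub>\<tau>)\<^sup>2 / (2 * \<tau>)) + E_inf_tilde \<rho>\<^sub>\<tau> \<rho>\<^sub>\<tau> \<le> ereal ((W2 \<rho> \<nu>)\<^sup>2 / (2 * \<tau>)) + E_inf_tilde \<nu> \<rho>\<^sub>\<tau>"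
    if nu: "\<nu> \<in> P2" for \<nu>
  proof (cases "dens_le_one \<nu>")
    case False
    then show ?thesis by (simp add: E_inf_tilde_def)
  next
    case True
    have "dens_le_one \<rho>\<^sub>\<tau>"
    proof (rule ccontr)
      assume "\<not> dens_le_one \<rho>\<^sub>\<tau>"
      then have "ereal ((W2 \<rho> \<rho>\<^sub>\<tau>)\<^sup>2 / (2 * \<tau>)) + E_inf \<rho>\<^sub>\<tau> = \<infinity>" by (simp add: E_inf_def)
      moreover have "ereal ((W2 \<rho> \<nu>)\<^sup>2 / (2 * \<tau>)) + E_inf \<nu> < \<infinity>" using True by (simp add: E_inf_def)
      ultimately show False using mini[OF nu] by simp
    qed
    obtain F where F: "dens F" "\<rho>\<^sub>\<tau> = density lborel F" "(\<integral>\<^sup>+x. ennreal (F x) \<partial>lborel) = 1"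
      using dens_of_P2[OF rt \<open>dens_le_one \<rho>\<^sub>\<tau>\<close>] by blast
    obtain G where G: "dens G" "\<nu> = density lborel G" "(\<integral>\<^sup>+x. ennreal (G x) \<partial>lborel) = 1"
      using dens_of_P2[OF nu True] by blast
    have [measurable]: "F \<in> borel_measurable borel" "G \<in> borel_measurable borel"
      and F0: "\<And>x. 0 \<le> F x" and G0: "\<And>x. 0 \<le> G x"
      using F(1) G(1) unfolding dens_def by auto
    define a where "a = Af F F"
    define b where "b = Af G F"
    define c where "c = Af G G"
    define w0 where "w0 = (W2 \<rho> \<rho>\<^sub>\<tau>)\<^sup>2"
    define w1 where "w1 = (W2 \<rho> \<nu>)\<^sup>2"
    have key: "0 \<le> t * ((w1 - w0) / (2 * \<tau>) + b - a) + t\<^sup>2 * ((a - 2 * b + c) / 2)" if t: "0 < t" "t \<le> 1" for t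
    proof -
      define P where "P x = (1 - t) * F x + t * G x" for x
      have P: "dens P" unfolding P_def by (rule dens_mix[OF F(1) G(1)]) (use t in auto)
      have [measurable]: "P \<in> borel_measurable borel" and P0: "\<And>x. 0 \<le> P x"
        using P unfolding dens_def by auto
      have P1: "(\<integral>\<^sup>+x. ennreal (P x) \<partial>lborel) = 1"
        using nn_lin[where F=F and G=G and h="\<lambda>_. 1" and t=t] F0 G0 t F(3) G(3)
        by (simp add: P_def ennreal_plus[symmetric] del: ennreal_plus)
      define \<mu> where "\<mu> = density lborel P"
      have mu: "\<mu> \<in> P2" "dens_le_one \<mu>" unfolding \<mu>_def using density_P2[OF P P1] by auto
      have ec: "emeasure \<mu> A = ennreal (1 - t) * emeasure \<rho>\<^sub>\<tau> A + ennreal t * emeasure \<nu> A" if A: "A \<in> sets borel" for A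
      proof -
        have [measurable]: "A \<in> sets borel" by (rule A)
        have "emeasure \<mu> A = (\<integral>\<^sup>+x. ennreal (P x * indicator A x) \<partial>lborel)"
          unfolding \<mu>_def by (rule emeasure_density_ind) (auto simp: P0)
        also have "\<dots> = ennreal (1 - t) * (\<integral>\<^sup>+x. ennreal (F x * indicator A x) \<partial>lborel) + ennreal t * (\<integral>\<^sup>+x. ennreal (G x * indicator A x) \<partial>lborel)"
          unfolding P_def by (rule nn_lin) (use F0 G0 t in auto)
        also have "(\<integral>\<^sup>+x. ennreal (F x * indicator A x) \<partial>lborel) = emeasure \<rho>\<^sub>\<tau> A"
          unfolding F(2) by (rule emeasure_density_ind[symmetric]) (auto simp: F0)
        also have "(\<integral>\<^sup>+x. ennreal (G x * indicator A x) \<partial>lborel) = emeasure \<nu> A"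
          unfolding G(2) by (rule emeasure_density_ind[symmetric]) (auto simp: G0)
        finally show ?thesis .
      qed
      have wt: "(W2 \<rho> \<mu>)\<^sup>2 \<le> (1 - t) * w0 + t * w1"
        unfolding w0_def w1_def
        by (rule W2_convex[OF assms(2) rt nu]) (use t ec in \<open>auto simp: \<mu>_def\<close>)
      have Emu: "E_inf \<mu> = ereal ((1/2) * Af P P)"
        using mu(2) unfolding E_inf_def \<mu>_def by (simp add: energy_density[OF P P])
      have Ert: "E_inf \<rho>\<^sub>\<tau> = ereal ((1/2) * a)"
        using \<open>dens_le_one \<rho>\<^sub>\<tau>\<close> unfolding E_inf_def a_def by (simp add: F(2) energy_density[OF F(1) F(1)])
      have "ereal (w0 / (2 * \<tau>)) + ereal ((1/2) * a) \<le> ereal ((W2 \<rho> \<mu>)\<^sup>2 / (2 * \<tau>)) + ereal ((1/2) * Af P P)"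
        using mini[OF mu(1)] unfolding Emu Ert w0_def .
      then have ineq: "w0 / (2 * \<tau>) + (1/2) * a \<le> (W2 \<rho> \<mu>)\<^sup>2 / (2 * \<tau>) + (1/2) * Af P P" by simp
      have wd: "(W2 \<rho> \<mu>)\<^sup>2 / (2 * \<tau>) \<le> ((1 - t) * w0 + t * w1) / (2 * \<tau>)"
        using wt assms(1) by (intro divide_right_mono) auto
      moreover have AP: "Af P P = (1 - t)\<^sup>2 * a + 2 * t * (1 - t) * b + t\<^sup>2 * c"
        unfolding a_def b_def c_def P_def using Af_mix[OF F(1) G(1)] t by auto
      have "w0 / (2 * \<tau>) + (1/2) * a \<le> ((1 - t) * w0 + t * w1) / (2 * \<tau>) + (1/2) * ((1 - t)\<^sup>2 * a + 2 * t * (1 - t) * b + t\<^sup>2 * c)"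
        by (rule order_trans[OF ineq[unfolded AP] add_right_mono[OF wd]])
      moreover have "((1 - t) * w0 + t * w1) / (2 * \<tau>) + (1/2) * ((1 - t)\<^sup>2 * a + 2 * t * (1 - t) * b + t\<^sup>2 * c)
          - (w0 / (2 * \<tau>) + (1/2) * a) = t * ((w1 - w0) / (2 * \<tau>) + b - a) + t\<^sup>2 * ((a - 2 * b + c) / 2)"
        using assms(1) by (simp add: field_simps power2_eq_square)
      ultimately show ?thesis by linarith
    qed
    have "0 \<le> (w1 - w0) / (2 * \<tau>) + b - a"
      by (rule lin_lim) (rule key)
    then have real_ineq: "w0 / (2 * \<tau>) + a \<le> w1 / (2 * \<tau>) + b"
      by (simp add: diff_divide_distrib)
    have "E_inf_tilde \<rho>\<^sub>\<tau> \<rho>\<^sub>\<tau> = ereal a"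
      using \<open>dens_le_one \<rho>\<^sub>\<tau>\<close> unfolding E_inf_tilde_def a_def
      by (simp add: energy_density[OF F(1) F(1), folded F(2)])
    moreover have "E_inf_tilde \<nu> \<rho>\<^sub>\<tau> = ereal b"
      using True unfolding E_inf_tilde_def b_def
      by (simp add: energy_density[OF G(1) F(1), folded F(2) G(2)])
    ultimately show ?thesis using real_ineq unfolding w0_def w1_def by simp
  qed
  then show ?thesis unfolding argmin_P2_def using rt by auto
qed

end
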